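(* Let $A\subset\mathbb{R}^N$ be nonempty and closed, and let the triple $(U,f,l)$ satisfy condition $(h)''$ relative to $A$. Define $H:[0,\infty)\times\mathbb{R}^N\times\mathbb{R}^N\to\mathbb{R}$ by $$H(t,x,p)=\sup_{u\in U(t)}\{\langle p,f(t,x,u)\rangle-l(t,x,u)\}.$$ Then $H$ satisfies condition $(h)''_H$ relative to $A$. Moreover, if $(U,f,l)$ satisfies (OPC), then $H$ satisfies $(\mathrm{OPC})_H$. Additionally, $(U,f,l)$ is an epigraphical representation of $H$, i.e. for all $t\in[0,\infty)$ and $x\in\mathbb{R}^N$, $$\mathrm{gph}\,H^*(t,x,\cdot)\subset (f,l)(t,x,U(t))\subset \mathrm{epi}\,H^*(t,x,\cdot),$$ where $(f,l)(t,x,u)=(f(t,x,u),l(t,x,u))$.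
   Context: $\mathbb{B}$ denotes the closed unit ball, $\mathbb{B}(x,r)$ the closed ball of radius $r$ centered at $x$, $\mathbb{S}$ the unit sphere, $\mathrm{bd}$ the boundary. For $H$ convex in the last variable, $H^*(t,x,v)=\sup_{p\in\mathbb{R}^N}\{\langle v,p\rangle-H(t,x,p)\}\in\mathbb{R}\cup\{+\infty\}$, $\mathrm{dom}\,H^*(t,x,\cdot)=\{v:H^*(t,x,v)<+\infty\}$, $\mathrm{gph}$ and $\mathrm{epi}$ denote graph and epigraph (over the effective domain). $\mathscr{L}_{\rm loc}$ is the set of $\varphi\in L^1_{\rm loc}([0,\infty);[0,\infty))$ with $\lim_{\sigma\to0}\theta_\varphi(\sigma)=0$, where $\theta_\varphi(\sigma)=\sup\{\int_I\varphi(\tau)d\tau : I$ a compact subinterval of $[0,\infty)$ of length $\le\sigma\}$. Condition $(h)''$ for $(U,f,l)$ relative to $A$: $U:[0,\infty)\rightsquigarrow\mathbb{R}^M$ is a measurable set-valued map with nonempty closed images, $f:[0,\infty)\times\mathbb{R}^N\times\mathbb{R}^M\to\mathbb{R}^N$, $l:[0,\infty)\times\mathbb{R}^N\times\mathbb{R}^M\to\mathbb{R}$, and: (h1) $f,l$ are Lebesgue measurable in $t$ for all $(x,u)$, continuous in $(x,u)$ for all $t$, and there is $\phi\in L^1([0,\infty);\mathbb{R})$ with $l(t,x,u)\ge\phi(t)$ for all $t,x,u$; (h2) $|f(t,x,u)|+|l(t,x,u)|\le c(t)(1+|x|)$ for all $t$, $x$, $u\in U(t)$, for some $c\in L^1_{\rm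 loc}([0,\infty);[0,\infty))$; (h3) for each $t$, the set-valued map $x\rightsquigarrow(f,l)(t,x,U(t))$ is continuous (in the Hausdorff sense) with closed images; (h4) for all $t,x$ the set $\{(f(t,x,u),l(t,x,u)+r):u\in U(t),r\ge0\}$ is convex; (h5) $|f(t,x,u)|+|l(t,x,u)|\le q(t)$ for all $t$, $x\in\mathrm{bd}A$, $u\in U(t)$, for some $q\in\mathscr{L}_{\rm loc}$; (h6) $|f(t,x,u)-f(t,y,u)|+|l(t,x,u)-l(t,y,u)|\le k(t)|x-y|$ for all $t$, $x,y$, $u\in U(t)$, for some $k\in\mathscr{L}_{\rm loc}$. Condition $(h)''_H$ for $H:[0,\infty)\times\mathbb{R}^N\times\mathbb{R}^N\to\mathbb{R}$ relative to $A$: (H1) $H$ is measurable in $t$, continuous in $x$, convex in $p$; (H2) $H(t,x,0)\le-\phi(t)$ for all $t,x$, for some $\phi\in L^1([0,\infty);\mathbb{R})$; and there exist $\lambda:[0,\infty)\times\mathbb{R}^N\to[0,\infty)$ measurable in $t$ and continuous in $x$, $c\in L^1_{\rm loc}([0,\infty);[0,\infty))$ and $k,q\in\mathscr{L}_{\rm loc}$ such that: (H3) $\lambda(t,x)\le c(t)(1+|x|)$ for all $x$ and $\lambda(t,x)\le q(t)$ for all $x\in\mathrm{bd}A$, for all $t$; (H4) $|\lambda(t,x)-\lambda(t,y)|\le k(t)|x-y|$; (H5) $|H(t,x,p)-H(t,y,p)|\le k(t)(1+|p|)|x-y|$; (H6) $|H(t,x,p)-H(t,x,q)|\le\lambda(t,x)|p-q|$;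 (H7) $|H^*(t,x,v)|\le\lambda(t,x)$ for all $v\in\mathrm{dom}\,H^*(t,x,\cdot)$ (all for all $t\ge0$ and $x,y,p,q\in\mathbb{R}^N$). Normal cones: $T_A(x)=\{\zeta:\liminf_{\tau\to0+}\mathrm{dist}(x+\tau\zeta,A)/\tau=0\}$; regular normal cone $N_A(x)=\{\xi:\langle\zeta,\xi\rangle\le0\ \forall\zeta\in T_A(x)\}$; limiting normal cone $\mathbb{N}_A(x)=\{\xi:\exists x_n\to x$ with $x_n\in A$, $\xi_n\to\xi$, $\xi_n\in N_A(x_n)\}$. For $y\in\mathbb{R}^N$, $\eta>0$: $\mathbb{N}^1_{y,\eta}=\{n\in\mathbb{S}: n\in\mathrm{cl}\,\mathrm{conv}\,\mathbb{N}_A(x)$ for some $x\in\mathrm{bd}A\cap\mathbb{B}(y,\eta)\}$. (OPC): there exist $\eta>0,r>0,M\ge0$ such that for almost all $t\ge0$, any $y\in\mathrm{bd}A+\eta\mathbb{B}$ and any $v\in f(t,y,U(t))$ with $\inf_{n\in\mathbb{N}^1_{y,\eta}}\langle n,v\rangle\le0$, there is $w\in f(t,y,U(t))\cap\mathbb{B}(v,M)$ with $\inf_{n\in\mathbb{N}^1_{y,\eta}}\min\{\langle n,w\rangle,\langle n,w-v\rangle\}\ge r$. $(\mathrm{OPC})_H$ is the same condition with $f(t,y,U(t))$ replaced by $\mathrm{dom}\,H^*(t,y,\cdot)$ (both for $v$ and $w$). *)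

theory Defs
  imports "HOL-Analysis.Analysis" "HOL-Library.Extended_Real"
begin

definition L1_pos :: "(real \<Rightarrow> real) \<Rightarrow> bool" where
  "L1_pos \<phi> \<longleftrightarrow> integrable (lebesgue_on {0..}) \<phi>"

definition L1loc_nonneg :: "(real \<Rightarrow> real) \<Rightarrow> bool" where
  "L1loc_nonneg c \<longleftrightarrow> (\<forall>t\<ge>0. 0 \<le> c t) \<and> (\<forall>T\<ge>0. integrable (lebesgue_on {0..T}) c)"

definition theta :: "(real \<Rightarrow> real) \<Rightarrow> real \<Rightarrow> ereal" where
  "theta \<phi> \<sigma> = (SUP ab \<in> {(a,b). 0 \<le> a \<and> a \<le> b \<and> b - a \<le> \<sigma>}.
                    ereal (integral\<^sup>L (lebesgue_on {fst ab..snd ab}) \<phi>))"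

definition Lscr_loc :: "(real \<Rightarrow> real) \<Rightarrow> bool" where
  "Lscr_loc \<phi> \<longleftrightarrow> L1loc_nonneg \<phi> \<and> ((theta \<phi>) \<longlongrightarrow> (0::ereal)) (at_right 0)"

definition measurable_setvalued :: "(real \<Rightarrow> 'b::euclidean_space set) \<Rightarrow> bool" where
  "measurable_setvalued U \<longleftrightarrow>
     (\<forall>G. open G \<longrightarrow> {t \<in> {0..}. U t \<inter> G \<noteq> {}} \<in> sets lebesgue)"

definition hausdorff_continuous :: "('a::metric_space \<Rightarrow> 'c::metric_space set) \<Rightarrow> bool" where
  "hausdorff_continuous F \<longleftrightarrow>
     (\<forall>x. \<forall>\<epsilon>>0. \<exists>\<delta>>0. \<forall>y. dist y x < \<delta> \<longrightarrow>
        (\<forall>z\<in>F y. \<exists>w\<in>F x. dist z w \<le> \<epsilon>) \<and> (\<forall>z\<in>F x. \<exists>w\<in>F y. dist z w \<le> \<epsilon>))"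

definition cond_h :: "'a::euclidean_space set \<Rightarrow> (real \<Rightarrow> 'b::euclidean_space set)
     \<Rightarrow> (real \<Rightarrow> 'a \<Rightarrow> 'b \<Rightarrow> 'a) \<Rightarrow> (real \<Rightarrow> 'a \<Rightarrow> 'b \<Rightarrow> real) \<Rightarrow> bool" where
  "cond_h A U f l \<longleftrightarrow>
     measurable_setvalued U \<and> (\<forall>t\<ge>0. U t \<noteq> {} \<and> closed (U t)) \<and>
     \<comment> \<open>(h1)\<close>
     (\<forall>x u. (\<lambda>t. f t x u) \<in> borel_measurable (lebesgue_on {0..}) \<and>
            (\<lambda>t. l t x u) \<in> borel_measurable (lebesgue_on {0..})) \<and>
     (\<forall>t\<ge>0. continuous_on UNIV (\<lambda>(x,u). f t x u) \<and> continuous_on UNIV (\<lambda>(x,u). l t x u)) \<and>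
     (\<exists>\<phi>. L1_pos \<phi> \<and> (\<forall>t\<ge>0. \<forall>x u. \<phi> t \<le> l t x u)) \<and>
     \<comment> \<open>(h2)\<close>
     (\<exists>c. L1loc_nonneg c \<and>
        (\<forall>t\<ge>0. \<forall>x. \<forall>u\<in>U t. norm (f t x u) + \<bar>l t x u\<bar> \<le> c t * (1 + norm x))) \<and>
     \<comment> \<open>(h3)\<close>
     (\<forall>t\<ge>0. hausdorff_continuous (\<lambda>x. (\<lambda>u. (f t x u, l t x u)) ` U t) \<and>
            (\<forall>x. closed ((\<lambda>u. (f t x u, l t x u)) ` U t))) \<and>
     \<comment> \<open>(h4)\<close>
     (\<forall>t\<ge>0. \<forall>x. convex {(f t x u, l t x u + r) | u r. u \<in> U t \<and> r \<ge> 0}) \<and>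
     \<comment> \<open>(h5)\<close>
     (\<exists>q. Lscr_loc q \<and>
        (\<forall>t\<ge>0. \<forall>x\<in>frontier A. \<forall>u\<in>U t. norm (f t x u) + \<bar>l t x u\<bar> \<le> q t)) \<and>
     \<comment> \<open>(h6)\<close>
     (\<exists>k. Lscr_loc k \<and>
        (\<forall>t\<ge>0. \<forall>x y. \<forall>u\<in>U t.
           norm (f t x u - f t y u) + \<bar>l t x u - l t y u\<bar> \<le> k t * norm (x - y)))"

definition hamiltonian :: "(real \<Rightarrow> 'b set) \<Rightarrow> (real \<Rightarrow> 'a::euclidean_space \<Rightarrow> 'b \<Rightarrow> 'a)
     \<Rightarrow> (real \<Rightarrow> 'a \<Rightarrow> 'b \<Rightarrow> real) \<Rightarrow> real \<Rightarrow> 'a \<Rightarrow> 'a \<Rightarrow> real" where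
  "hamiltonian U f l t x p = (SUP u \<in> U t. p \<bullet> f t x u - l t x u)"

definition Hstar :: "(real \<Rightarrow> 'a::euclidean_space \<Rightarrow> 'a \<Rightarrow> real) \<Rightarrow> real \<Rightarrow> 'a \<Rightarrow> 'a \<Rightarrow> ereal" where
  "Hstar H t x v = (SUP p. ereal (v \<bullet> p - H t x p))"

definition dom_Hstar :: "(real \<Rightarrow> 'a::euclidean_space \<Rightarrow> 'a \<Rightarrow> real) \<Rightarrow> real \<Rightarrow> 'a \<Rightarrow> 'a set" where
  "dom_Hstar H t x = {v. Hstar H t x v < \<infinity>}"

definition gph_Hstar :: "(real \<Rightarrow> 'a::euclidean_space \<Rightarrow> 'a \<Rightarrow> real) \<Rightarrow> real \<Rightarrow> 'a \<Rightarrow> ('a \<times> real) set" where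
  "gph_Hstar H t x = {(v, r). Hstar H t x v = ereal r}"

definition epi_Hstar :: "(real \<Rightarrow> 'a::euclidean_space \<Rightarrow> 'a \<Rightarrow> real) \<Rightarrow> real \<Rightarrow> 'a \<Rightarrow> ('a \<times> real) set" where
  "epi_Hstar H t x = {(v, r). Hstar H t x v \<le> ereal r}"

definition cond_hH :: "'a::euclidean_space set \<Rightarrow> (real \<Rightarrow> 'a \<Rightarrow> 'a \<Rightarrow> real) \<Rightarrow> bool" where
  "cond_hH A H \<longleftrightarrow>
     \<comment> \<open>(H1)\<close>
     (\<forall>x p. (\<lambda>t. H t x p) \<in> borel_measurable (lebesgue_on {0..})) \<and>
     (\<forall>t\<ge>0. \<forall>p. continuous_on UNIV (\<lambda>x. H t x p)) \<and>
     (\<forall>t\<ge>0. \<forall>x. convex_on UNIV (H t x)) \<and>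
     \<comment> \<open>(H2)\<close>
     (\<exists>\<phi>. L1_pos \<phi> \<and> (\<forall>t\<ge>0. \<forall>x. H t x 0 \<le> - \<phi> t)) \<and>
     (\<exists>lam c k q.
        (\<forall>t\<ge>0. \<forall>x. 0 \<le> lam t x) \<and>
        (\<forall>x. (\<lambda>t. lam t x) \<in> borel_measurable (lebesgue_on {0..})) \<and>
        (\<forall>t\<ge>0. continuous_on UNIV (lam t)) \<and>
        L1loc_nonneg c \<and> Lscr_loc k \<and> Lscr_loc q \<and>
        \<comment> \<open>(H3)\<close>
        (\<forall>t\<ge>0. (\<forall>x. lam t x \<le> c t * (1 + norm x)) \<and> (\<forall>x\<in>frontier A. lam t x \<le> q t)) \<and>
        \<comment> \<open>(H4)\<close>
        (\<forall>t\<ge>0. \<forall>x y. \<bar>lam t x - lam t y\<bar> \<le> k t * norm (x - y)) \<and>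
        \<comment> \<open>(H5)\<close>
        (\<forall>t\<ge>0. \<forall>x y p. \<bar>H t x p - H t y p\<bar> \<le> k t * (1 + norm p) * norm (x - y)) \<and>
        \<comment> \<open>(H6)\<close>
        (\<forall>t\<ge>0. \<forall>x p q'. \<bar>H t x p - H t x q'\<bar> \<le> lam t x * norm (p - q')) \<and>
        \<comment> \<open>(H7)\<close>
        (\<forall>t\<ge>0. \<forall>x. \<forall>v\<in>dom_Hstar H t x. \<bar>Hstar H t x v\<bar> \<le> ereal (lam t x)))"

definition tangent_cone :: "'a::euclidean_space set \<Rightarrow> 'a \<Rightarrow> 'a set" where
  "tangent_cone A x = {\<zeta>. Liminf (at_right 0) (\<lambda>\<tau>::real. ereal (infdist (x + \<tau> *\<^sub>R \<zeta>) A / \<tau>)) = 0}"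

definition regular_normal_cone :: "'a::euclidean_space set \<Rightarrow> 'a \<Rightarrow> 'a set" where
  "regular_normal_cone A x = {\<xi>. \<forall>\<zeta>\<in>tangent_cone A x. \<zeta> \<bullet> \<xi> \<le> 0}"

definition limiting_normal_cone :: "'a::euclidean_space set \<Rightarrow> 'a \<Rightarrow> 'a set" where
  "limiting_normal_cone A x = {\<xi>. \<exists>xs \<xi>s. (\<forall>n. xs n \<in> A \<and> \<xi>s n \<in> regular_normal_cone A (xs n)) \<and>
                                     xs \<longlonglongrightarrow> x \<and> \<xi>s \<longlonglongrightarrow> \<xi>}"

definition N1 :: "'a::euclidean_space set \<Rightarrow> 'a \<Rightarrow> real \<Rightarrow> 'a set" where
  "N1 A y \<eta> = {n \<in> sphere 0 1. \<exists>x \<in> frontier A \<inter> cball y \<eta>.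
                   n \<in> closure (convex hull (limiting_normal_cone A x))}"

text \<open>(OPC) for a velocity set-valued map F(t,y): instantiated with F(t,y) = f(t,y,U(t)) gives (OPC),
  with F(t,y) = dom H*(t,y,.) gives (OPC)_H.  Infima over possibly empty sets are taken in ereal (inf of empty = +\<infinity>).\<close>
definition OPC :: "'a::euclidean_space set \<Rightarrow> (real \<Rightarrow> 'a \<Rightarrow> 'a set) \<Rightarrow> bool" where
  "OPC A F \<longleftrightarrow> (\<exists>\<eta>>0. \<exists>r>0. \<exists>M\<ge>0.
     AE t in lborel. t \<ge> 0 \<longrightarrow>
       (\<forall>y. (\<exists>z\<in>frontier A. dist y z \<le> \<eta>) \<longrightarrow>
          (\<forall>v\<in>F t y. (INF n\<in>N1 A y \<eta>. ereal (n \<bullet> v)) \<le> 0 \<longrightarrow>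
             (\<exists>w\<in>F t y \<inter> cball v M.
                (INF n\<in>N1 A y \<eta>. ereal (min (n \<bullet> w) (n \<bullet> (w - v)))) \<ge> ereal r))))"

end

theory Submission
  imports Defs
begin


lemma sup_measurable:
  fixes U :: "real \<Rightarrow> 'b::euclidean_space set" and g :: "real \<Rightarrow> 'b \<Rightarrow> real"
  assumes U: "measurable_setvalued U"
    and gm: "\<And>u. (\<lambda>t. g t u) \<in> borel_measurable (lebesgue_on {0..})"
    and gc: "\<And>t. t \<ge> 0 \<Longrightarrow> continuous_on UNIV (g t)"
    and ne: "\<And>t. t \<ge> 0 \<Longrightarrow> U t \<noteq> {}"
    and bd: "\<And>t. t \<ge> 0 \<Longrightarrow> bdd_above (g t ` U t)"
  shows "(\<lambda>t. SUP u\<in>U t. g t u) \<in> borel_measurable (lebesgue_on {0..})"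
proof -
  let ?M = "lebesgue_on {0::real..}"
  have sp: "space ?M = {0..}" by simp
  obtain D :: "'b set" where cD: "countable D" and dD: "\<And>X. open X \<Longrightarrow> X \<noteq> {} \<Longrightarrow> \<exists>d\<in>D. d \<in> X"
    by (rule countable_dense_setE) blast
  have setU: "{t \<in> {0..}. U t \<inter> ball d r \<noteq> {}} \<in> sets ?M" for d r
  proof -
    have "{t \<in> {0..}. U t \<inter> ball d r \<noteq> {}} \<in> sets lebesgue"
      using U unfolding measurable_setvalued_def by auto
    then show ?thesis by (subst sets_restrict_space_iff) auto
  qed
  have setg: "{t \<in> {0..}. c \<le> g t e} \<in> sets ?M" for c e
  proof -
    have "{t \<in> space ?M. c \<le> g t e} \<in> sets ?M" using gm[of e] by measurable
    then show ?thesis by simp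
  qed
  show ?thesis
  proof (subst borel_measurable_iff_greater, intro allI)
    fix a :: real
    let ?P = "\<lambda>t. \<exists>d\<in>D. \<exists>m::nat. \<exists>j::nat. U t \<inter> ball d (1/(Suc m)) \<noteq> {} \<and>
                 (\<forall>e\<in>D \<inter> ball d (1/(Suc m)). a + 1/(Suc j) \<le> g t e)"
    have key: "a < (SUP u\<in>U t. g t u) \<longleftrightarrow> ?P t" if t0: "t \<ge> 0" for t
    proof
      assume lt: "a < (SUP u\<in>U t. g t u)"
      from lt obtain u where u: "u \<in> U t" and au: "a < g t u"
        using less_cSUP_iff[OF ne[OF t0] bd[OF t0]] by blast
      define \<delta> where "\<delta> = g t u - a"
      have dpos: "\<delta> > 0" using au \<delta>_def by simp
      obtain \<epsilon> where ep: "\<epsilon> > 0" and cont: "\<And>e. dist e u < \<epsilon> \<Longrightarrow> dist (g t e) (g t u) < \<delta>/2"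
        using gc[OF t0] dpos unfolding continuous_on_iff by (metis UNIV_I half_gt_zero)
      obtain j :: nat where j: "1 / Suc j < \<delta>/2"
        using dpos by (metis half_gt_zero nat_approx_posE)
      obtain m :: nat where m: "1 / Suc m < \<epsilon>/2"
        using ep by (metis half_gt_zero nat_approx_posE)
      obtain d where dD': "d \<in> D" and dm: "d \<in> ball u (1/Suc m)"
        using dD[of "ball u (1/Suc m)"] by auto
      have ub: "u \<in> U t \<inter> ball d (1/Suc m)" using u dm by (simp add: dist_commute)
      have "\<forall>e\<in>D \<inter> ball d (1/(Suc m)). a + 1/(Suc j) \<le> g t e"
      proof
        fix e assume "e \<in> D \<inter> ball d (1/(Suc m))"
        then have "dist e u < \<epsilon>" using dm m dist_triangle[of e u d]
          by (simp add: dist_commute)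
        then have "dist (g t e) (g t u) < \<delta>/2" by (rule cont)
        then have "g t u - g t e < \<delta>/2" unfolding dist_real_def by linarith
        then show "a + 1/(Suc j) \<le> g t e" using j \<delta>_def by linarith
      qed
      then show "?P t" using dD' ub by blast
    next
      assume P: "?P t"
      note t0' = t0
      from P obtain d m j u where u: "u \<in> U t" "u \<in> ball d (1/(Suc m))"
        and all: "\<forall>e\<in>D \<inter> ball d (1/(Suc m)). a + 1/(Suc j) \<le> g t e" by blast
      have gu: "a + 1/(Suc j) \<le> g t u"
      proof (rule ccontr)
        assume "\<not> ?thesis"
        then have "g t u < a + 1/(Suc j)" by simp
        define V where "V = ball d (1/(Suc m)) \<inter> (g t -` {..<a + 1/(Suc j)})"
        have "open (g t -` {..<a + 1/(Suc j)})"
          using gc[OF t0'] open_vimage[of "{..<a + 1/(Suc j)}" "g t"] by simp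
        then have "open V" unfolding V_def by auto
        moreover have "u \<in> V" using u \<open>g t u < _\<close> V_def by simp
        ultimately obtain e where "e \<in> D" "e \<in> V" using dD by blast
        then show False using all V_def by force
      qed
      have "g t u \<le> (SUP u\<in>U t. g t u)" by (rule cSUP_upper[OF u(1) bd[OF t0']])
      moreover have "0 < 1 / real (Suc j)" by simp
      ultimately show "a < (SUP u\<in>U t. g t u)" using gu by linarith
    qed
    have eq: "{t \<in> space ?M. a < (SUP u\<in>U t. g t u)} = {t \<in> {0..}. ?P t}"
      using key by auto
    have "{t \<in> {0..}. ?P t} \<in> sets ?M"
    proof -
      have "{t \<in> {0..}. ?P t} = {t \<in> space ?M. ?P t}" by simp
      also have "\<dots> \<in> sets ?M"
      proof (rule sets.sets_Collect_countable_Ex'[OF _ cD])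
        fix d assume "d \<in> D"
        show "{t \<in> space ?M. \<exists>m::nat. \<exists>j::nat. U t \<inter> ball d (1/(Suc m)) \<noteq> {} \<and>
                 (\<forall>e\<in>D \<inter> ball d (1/(Suc m)). a + 1/(Suc j) \<le> g t e)} \<in> sets ?M"
        proof (intro sets.sets_Collect_countable_Ex sets.sets_Collect_conj)
          fix m j :: nat
          show "{t \<in> space ?M. U t \<inter> ball d (1/(Suc m)) \<noteq> {}} \<in> sets ?M"
            using setU by simp
          show "{t \<in> space ?M. \<forall>e\<in>D \<inter> ball d (1/(Suc m)). a + 1/(Suc j) \<le> g t e} \<in> sets ?M"
            by (rule sets.sets_Collect_countable_All') (use setg cD in auto)
        qed
      qed
      finally show ?thesis .
    qed
    then show "{t \<in> space ?M. a < (SUP u\<in>U t. g t u)} \<in> sets ?M" using eq by simp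
  qed
qed



lemma gph_lemma:
  fixes f :: "'b \<Rightarrow> 'a::euclidean_space" and l :: "'b \<Rightarrow> real" and Us :: "'b set"
    and Hp :: "'a \<Rightarrow> real"
  assumes ne: "Us \<noteq> {}" and cl: "closed ((\<lambda>u. (f u, l u)) ` Us)"
    and bnd: "\<forall>u\<in>Us. norm (f u) + \<bar>l u\<bar> \<le> B"
    and cvx: "convex {(f u, l u + r) | u r. u \<in> Us \<and> r \<ge> 0}"
    and Hdef: "\<And>p. Hp p = (SUP u\<in>Us. p \<bullet> f u - l u)"
    and hs: "(SUP p. ereal (v \<bullet> p - Hp p)) = ereal r"
  shows "(v, r) \<in> (\<lambda>u. (f u, l u)) ` Us"
proof -
  let ?K = "(\<lambda>u. (f u, l u)) ` Us"
  let ?S = "{(f u, l u + r) | u r. u \<in> Us \<and> r \<ge> 0}"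
  have bnd': "norm (f u) + \<bar>l u\<bar> \<le> B" if "u \<in> Us" for u using bnd that by blast
  have bddH: "bdd_above ((\<lambda>u. p \<bullet> f u - l u) ` Us)" for p
  proof (rule bdd_aboveI2)
    fix u assume u: "u \<in> Us"
    have "p \<bullet> f u \<le> norm p * norm (f u)" by (rule norm_cauchy_schwarz)
    also have "\<dots> \<le> norm p * B" using bnd'[OF u] by (intro mult_left_mono) (auto simp: add_increasing2)
    moreover have "\<bar>l u\<bar> \<le> B" using bnd'[OF u] norm_ge_zero[of "f u"] by linarith
    ultimately show "p \<bullet> f u - l u \<le> norm p * B + B" by linarith
  qed
  have Hup: "p \<bullet> f u - l u \<le> Hp p" if "u \<in> Us" for p u
    unfolding Hdef by (rule cSUP_upper[OF that bddH])
  have Hle: "Hp p \<le> C" if "\<And>u. u \<in> Us \<Longrightarrow> p \<bullet> f u - l u \<le> C" for p C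
    unfolding Hdef by (rule cSUP_least[OF ne]) (use that in auto)
  have hslow: "ereal (v \<bullet> p - Hp p) \<le> ereal r" for p
    using hs[symmetric] by (metis SUP_upper UNIV_I)
  have hsup: "r \<le> l u" if "u \<in> Us" "f u = v" for u
  proof -
    have "ereal r \<le> ereal (l u)"
      unfolding hs[symmetric]
    proof (rule SUP_least)
      fix p show "ereal (v \<bullet> p - Hp p) \<le> ereal (l u)"
        using Hup[OF that(1), of p] that(2) by (simp add: inner_commute)
    qed
    then show ?thesis by simp
  qed
  have Kcomp: "compact ?K"
  proof -
    have "bounded ?K" unfolding bounded_iff
    proof (intro exI ballI)
      fix z assume "z \<in> ?K"
      then obtain u where u: "u \<in> Us" "z = (f u, l u)" by auto
      have "norm z \<le> norm (f u) + norm (l u)" using u norm_Pair_le[of "f u" "l u"] by simp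
      then show "norm z \<le> B" using bnd'[OF u(1)] by simp
    qed
    then show ?thesis using cl compact_eq_bounded_closed by blast
  qed
  have Seq: "?S = (\<Union>z\<in>?K. \<Union>y\<in>{0::'a} \<times> {0::real..}. {z + y})"
    by (auto simp: image_iff) force+
  have Scl: "closed ?S" unfolding Seq
    by (rule compact_closed_sums[OF Kcomp]) (intro closed_Times closed_atLeast closed_singleton)
  have inS: "(v, r) \<in> ?S"
  proof (rule ccontr)
    assume "(v, r) \<notin> ?S"
    from separating_hyperplane_closed_point[OF cvx Scl this]
    obtain a b where ab: "inner a (v, r) < b" "\<forall>z\<in>?S. inner a z > b" by blast
    obtain p \<alpha> where a: "a = (p, \<alpha>)" by (cases a)
    have sep: "p \<bullet> f u + \<alpha> * (l u + s) > b" if "u \<in> Us" "s \<ge> 0" for u s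
      using ab(2) that a by force
    have sv: "p \<bullet> v + \<alpha> * r < b" using ab(1) a by simp
    obtain u0 where u0: "u0 \<in> Us" using ne by auto
    have \<alpha>0: "\<alpha> \<ge> 0"
    proof (rule ccontr)
      assume "\<not> \<alpha> \<ge> 0"
      then have an: "\<alpha> < 0" by simp
      define s where "s = (p \<bullet> f u0 + \<alpha> * l u0 - b) / (- \<alpha>) + 1"
      have "\<alpha> * s = - (p \<bullet> f u0 + \<alpha> * l u0 - b) + \<alpha>"
        using an unfolding s_def by (simp add: field_simps)
      moreover have "s \<ge> 0"
      proof -
        have "p \<bullet> f u0 + \<alpha> * (l u0 + 0) > b" using sep[OF u0, of 0] by simp
        then show ?thesis using an unfolding s_def by (simp add: field_simps)
      qed
      ultimately show False using sep[OF u0 \<open>s \<ge> 0\<close>] an by (simp add: algebra_simps)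
    qed
    show False
    proof (cases "\<alpha> = 0")
      case False
      then have ap: "\<alpha> > 0" using \<alpha>0 by simp
      define P where "P = (- (1/\<alpha>)) *\<^sub>R p"
      have "Hp P \<le> - b / \<alpha>"
      proof (rule Hle)
        fix u assume u: "u \<in> Us"
        have "p \<bullet> f u + \<alpha> * l u > b" using sep[OF u, of 0] by simp
        then have "(p \<bullet> f u + \<alpha> * l u) / \<alpha> > b / \<alpha>" using ap by (simp add: divide_strict_right_mono)
        moreover have "P \<bullet> f u - l u = - ((p \<bullet> f u + \<alpha> * l u) / \<alpha>)"
          unfolding P_def using ap by (simp add: field_simps)
        ultimately show "P \<bullet> f u - l u \<le> - b / \<alpha>" by linarith
      qed
      moreover have "(p \<bullet> v + \<alpha> * r) / \<alpha> < b / \<alpha>" using sv ap by (simp add: divide_strict_right_mono)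
      moreover have "v \<bullet> P = - ((p \<bullet> v) / \<alpha>)" unfolding P_def by (simp add: inner_commute)
      moreover have "(p \<bullet> v + \<alpha> * r) / \<alpha> = (p \<bullet> v) / \<alpha> + r" using ap by (simp add: field_simps)
      ultimately have "v \<bullet> P - Hp P > r" by linarith
      then show False using hslow[of P] by simp
    next
      case True
      have sep0: "p \<bullet> f u > b" if "u \<in> Us" for u using sep[OF that, of 0] True by simp
      have sv0: "p \<bullet> v < b" using sv True by simp
      define lm where "lm = \<bar>r - (- Hp 0) + 1\<bar> / (b - p \<bullet> v)"
      have lpos: "lm \<ge> 0" unfolding lm_def using sv0 by simp
      have lb: "lm * (b - p \<bullet> v) \<ge> r + Hp 0 + 1" unfolding lm_def using sv0 by simp
      define P where "P = (- lm) *\<^sub>R p"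
      have "Hp P \<le> - lm * b + Hp 0"
      proof (rule Hle)
        fix u assume u: "u \<in> Us"
        have "- l u \<le> Hp 0" using Hup[OF u, of 0] by simp
        moreover have "lm * b \<le> lm * (p \<bullet> f u)" using sep0[OF u] lpos by (intro mult_left_mono) auto
        ultimately show "P \<bullet> f u - l u \<le> - lm * b + Hp 0" unfolding P_def by simp
      qed
      then have "v \<bullet> P - Hp P > r" unfolding P_def using lb
        by (simp add: inner_commute algebra_simps)
      then show False using hslow[of P] by simp
    qed
  qed
  then obtain u s where us: "u \<in> Us" "s \<ge> 0" "v = f u" "r = l u + s" by blast
  with hsup[OF us(1)] have "s = 0" by simp
  with us show ?thesis by auto
qed


lemma OPC_cong:
  assumes "OPC A F" and "\<And>t y. t \<ge> 0 \<Longrightarrow> G t y = F t y"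
  shows "OPC A G"
  using assms(1) unfolding OPC_def
  apply (elim exE conjE)
  subgoal for \<eta> r M
    apply (rule exI[of _ \<eta>], rule conjI, assumption)
    apply (rule exI[of _ r], rule conjI, assumption)
    apply (rule exI[of _ M], rule conjI, assumption)
    apply (erule eventually_mono)
    apply (simp add: assms(2))
    done
  done


theorem theorem3p1:
  fixes A :: "'a::euclidean_space set"
    and U :: "real \<Rightarrow> 'b::euclidean_space set"
    and f :: "real \<Rightarrow> 'a \<Rightarrow> 'b \<Rightarrow> 'a"
    and l :: "real \<Rightarrow> 'a \<Rightarrow> 'b \<Rightarrow> real"
  assumes "A \<noteq> {}" and "closed A" and "cond_h A U f l"
  shows "cond_hH A (hamiltonian U f l)
         \<and> (OPC A (\<lambda>t y. f t y ` U t) \<longrightarrow> OPC A (dom_Hstar (hamiltonian U f l)))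
         \<and> (\<forall>t\<ge>0. \<forall>x.
              gph_Hstar (hamiltonian U f l) t x \<subseteq> (\<lambda>u. (f t x u, l t x u)) ` U t
            \<and> (\<lambda>u. (f t x u, l t x u)) ` U t \<subseteq> epi_Hstar (hamiltonian U f l) t x)"
proof -
  obtain \<phi> c q k where
    Um: "measurable_setvalued U" and Une: "\<forall>t\<ge>0. U t \<noteq> {} \<and> closed (U t)"
    and meas: "\<forall>x u. (\<lambda>t. f t x u) \<in> borel_measurable (lebesgue_on {0..}) \<and>
            (\<lambda>t. l t x u) \<in> borel_measurable (lebesgue_on {0..})"
    and cont: "\<forall>t\<ge>0. continuous_on UNIV (\<lambda>(x,u). f t x u) \<and> continuous_on UNIV (\<lambda>(x,u). l t x u)"
    and \<phi>: "L1_pos \<phi>" "\<forall>t\<ge>0. \<forall>x u. \<phi> t \<le> l t x u"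
    and c: "L1loc_nonneg c" "\<forall>t\<ge>0. \<forall>x. \<forall>u\<in>U t. norm (f t x u) + \<bar>l t x u\<bar> \<le> c t * (1 + norm x)"
    and h3: "\<forall>t\<ge>0. hausdorff_continuous (\<lambda>x. (\<lambda>u. (f t x u, l t x u)) ` U t) \<and>
            (\<forall>x. closed ((\<lambda>u. (f t x u, l t x u)) ` U t))"
    and h4: "\<forall>t\<ge>0. \<forall>x. convex {(f t x u, l t x u + r) | u r. u \<in> U t \<and> r \<ge> 0}"
    and q: "Lscr_loc q" "\<forall>t\<ge>0. \<forall>x\<in>frontier A. \<forall>u\<in>U t. norm (f t x u) + \<bar>l t x u\<bar> \<le> q t"
    and k: "Lscr_loc k" "\<forall>t\<ge>0. \<forall>x y. \<forall>u\<in>U t.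
           norm (f t x u - f t y u) + \<bar>l t x u - l t y u\<bar> \<le> k t * norm (x - y)"
    using assms(3) unfolding cond_h_def by (elim conjE exE) (rule that; assumption)
  define H where "H = hamiltonian U f l"
  define N where "N = (\<lambda>t x u. norm (f t x u) + \<bar>l t x u\<bar>)"
  define lam where "lam = (\<lambda>t x. SUP u\<in>U t. N t x u)"
  have Hdef: "H t x p = (SUP u\<in>U t. p \<bullet> f t x u - l t x u)" for t x p
    unfolding H_def hamiltonian_def ..
  have ne: "U t \<noteq> {}" if "t \<ge> 0" for t using Une that by blast
  have bndc: "N t x u \<le> c t * (1 + norm x)" if "t \<ge> 0" "u \<in> U t" for t x u
    using c(2) that unfolding N_def by blast
  have Nnn: "0 \<le> N t x u" for t x u unfolding N_def by simp
  have k0: "0 \<le> k t" if "t \<ge> 0" for t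
    using k(1) that unfolding Lscr_loc_def L1loc_nonneg_def by blast
  have kb: "norm (f t x u - f t y u) + \<bar>l t x u - l t y u\<bar> \<le> k t * norm (x - y)"
    if "t \<ge> 0" "u \<in> U t" for t x y u using k(2) that by blast
  have \<phi>b: "\<phi> t \<le> l t x u" if "t \<ge> 0" for t x u using \<phi>(2) that by blast
  have bddH: "bdd_above ((\<lambda>u. p \<bullet> f t x u - l t x u) ` U t)" if t: "t \<ge> 0" for t x p
  proof (rule bdd_aboveI2)
    fix u assume u: "u \<in> U t"
    have b: "norm (f t x u) + \<bar>l t x u\<bar> \<le> c t * (1 + norm x)" using bndc[OF t u] unfolding N_def .
    have "p \<bullet> f t x u \<le> norm p * norm (f t x u)" by (rule norm_cauchy_schwarz)
    also have "\<dots> \<le> norm p * (c t * (1 + norm x))" using b by (intro mult_left_mono) (auto simp: add_increasing2)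
    finally show "p \<bullet> f t x u - l t x u \<le> norm p * (c t * (1 + norm x)) + c t * (1 + norm x)"
      using b norm_ge_zero[of "f t x u"] by linarith
  qed
  have Hup: "p \<bullet> f t x u - l t x u \<le> H t x p" if "t \<ge> 0" "u \<in> U t" for t x p u
    unfolding Hdef by (rule cSUP_upper[OF that(2) bddH[OF that(1)]])
  have Hle: "H t x p \<le> C" if "t \<ge> 0" "\<And>u. u \<in> U t \<Longrightarrow> p \<bullet> f t x u - l t x u \<le> C" for t x p C
    unfolding Hdef by (rule cSUP_least[OF ne[OF that(1)]]) (use that in auto)
  have bddL: "bdd_above (N t x ` U t)" if t: "t \<ge> 0" for t x
    using bndc[OF t] by (intro bdd_aboveI2) 
  have Lup: "N t x u \<le> lam t x" if "t \<ge> 0" "u \<in> U t" for t x u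
    unfolding lam_def by (rule cSUP_upper[OF that(2) bddL[OF that(1)]])
  have Lle: "lam t x \<le> C" if "t \<ge> 0" "\<And>u. u \<in> U t \<Longrightarrow> N t x u \<le> C" for t x C
    unfolding lam_def by (rule cSUP_least[OF ne[OF that(1)]]) (use that in auto)
  have fcu: "continuous_on UNIV (\<lambda>u. f t x u)" if "t \<ge> 0" for t x
  proof -
    have "continuous_on UNIV (\<lambda>(x,u). f t x u)" using cont that by blast
    then have "continuous_on UNIV (\<lambda>u. (\<lambda>(x,u). f t x u) (x,u))"
      by (rule continuous_on_compose2[OF _ continuous_on_Pair[OF continuous_on_const continuous_on_id]]) auto
    then show ?thesis by simp
  qed
  have lcu: "continuous_on UNIV (\<lambda>u. l t x u)" if "t \<ge> 0" for t x
  proof -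
    have "continuous_on UNIV (\<lambda>(x,u). l t x u)" using cont that by blast
    then have "continuous_on UNIV (\<lambda>u. (\<lambda>(x,u). l t x u) (x,u))"
      by (rule continuous_on_compose2[OF _ continuous_on_Pair[OF continuous_on_const continuous_on_id]]) auto
    then show ?thesis by simp
  qed

  have HSlow: "ereal (v \<bullet> p - H t x p) \<le> Hstar H t x v" for t x v p
    unfolding Hstar_def by (rule SUP_upper) simp
  have HSup: "Hstar H t x (f t x u) \<le> ereal (l t x u)" if "t \<ge> 0" "u \<in> U t" for t x u
    unfolding Hstar_def
  proof (rule SUP_least)
    fix p show "ereal (f t x u \<bullet> p - H t x p) \<le> ereal (l t x u)"
      using Hup[OF that, of p x] by (simp add: inner_commute)
  qed
  have gph: "(v, r) \<in> (\<lambda>u. (f t x u, l t x u)) ` U t" if t: "t \<ge> 0" and hs: "Hstar H t x v = ereal r" for t x v r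
  proof (rule gph_lemma[where Hp = "H t x" and B = "c t * (1 + norm x)"])
    show "U t \<noteq> {}" by (rule ne[OF t])
    show "closed ((\<lambda>u. (f t x u, l t x u)) ` U t)" using h3 t by blast
    show "\<forall>u\<in>U t. norm (f t x u) + \<bar>l t x u\<bar> \<le> c t * (1 + norm x)" using bndc[OF t] unfolding N_def by blast
    show "convex {(f t x u, l t x u + r) | u r. u \<in> U t \<and> r \<ge> 0}" using h4 t by blast
    show "\<And>p. H t x p = (SUP u\<in>U t. p \<bullet> f t x u - l t x u)" by (rule Hdef)
    show "(SUP p. ereal (v \<bullet> p - H t x p)) = ereal r" using hs unfolding Hstar_def .
  qed
  have fin: "\<exists>r. Hstar H t x v = ereal r" if "v \<in> dom_Hstar H t x" for t x v
  proof -
    have "Hstar H t x v < \<infinity>" using that unfolding dom_Hstar_def by simp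
    moreover have "ereal (v \<bullet> 0 - H t x 0) \<le> Hstar H t x v" by (rule HSlow)
    ultimately have "\<bar>Hstar H t x v\<bar> \<noteq> \<infinity>" by force
    then show ?thesis by (intro exI[of _ "real_of_ereal (Hstar H t x v)"]) (rule ereal_real'[symmetric])
  qed
  have domeq: "dom_Hstar H t x = f t x ` U t" if t: "t \<ge> 0" for t x
  proof
    show "dom_Hstar H t x \<subseteq> f t x ` U t"
    proof
      fix v assume "v \<in> dom_Hstar H t x"
      then obtain r where "Hstar H t x v = ereal r" using fin by blast
      from gph[OF t this] show "v \<in> f t x ` U t" by auto
    qed
    show "f t x ` U t \<subseteq> dom_Hstar H t x"
    proof
      fix v assume "v \<in> f t x ` U t"
      then obtain u where u: "u \<in> U t" "v = f t x u" by auto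
      have "Hstar H t x v \<le> ereal (l t x u)" using HSup[OF t u(1)] u(2) by simp
      then have "Hstar H t x v < \<infinity>" by (rule le_less_trans) simp
      then show "v \<in> dom_Hstar H t x" unfolding dom_Hstar_def by simp
    qed
  qed
  have part3: "\<forall>t\<ge>0. \<forall>x. gph_Hstar H t x \<subseteq> (\<lambda>u. (f t x u, l t x u)) ` U t
            \<and> (\<lambda>u. (f t x u, l t x u)) ` U t \<subseteq> epi_Hstar H t x"
  proof (intro allI impI conjI)
    fix t x assume t: "(t::real) \<ge> 0"
    show "gph_Hstar H t x \<subseteq> (\<lambda>u. (f t x u, l t x u)) ` U t"
      unfolding gph_Hstar_def using gph[OF t] by auto
    show "(\<lambda>u. (f t x u, l t x u)) ` U t \<subseteq> epi_Hstar H t x"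
      unfolding epi_Hstar_def using HSup[OF t] by auto
  qed
  have part2: "OPC A (\<lambda>t y. f t y ` U t) \<longrightarrow> OPC A (dom_Hstar H)"
    using OPC_cong[of A "\<lambda>t y. f t y ` U t" "dom_Hstar H"] domeq by blast
  have Hmeas: "(\<lambda>t. H t x p) \<in> borel_measurable (lebesgue_on {0..})" for x p
    unfolding Hdef
  proof (rule sup_measurable[OF Um, where g = "\<lambda>t u. p \<bullet> f t x u - l t x u"])
    fix u show "(\<lambda>t. p \<bullet> f t x u - l t x u) \<in> borel_measurable (lebesgue_on {0..})"
      using meas by (intro borel_measurable_diff borel_measurable_inner borel_measurable_const) auto
  next
    fix t :: real assume t: "t \<ge> 0"
    show "continuous_on UNIV (\<lambda>u. p \<bullet> f t x u - l t x u)"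
      by (rule continuous_on_diff[OF continuous_on_inner[OF continuous_on_const fcu[OF t]] lcu[OF t]])
    show "U t \<noteq> {}" by (rule ne[OF t])
    show "bdd_above ((\<lambda>u. p \<bullet> f t x u - l t x u) ` U t)" by (rule bddH[OF t])
  qed
  have Lmeas: "(\<lambda>t. lam t x) \<in> borel_measurable (lebesgue_on {0..})" for x
    unfolding lam_def
  proof (rule sup_measurable[OF Um, where g = "\<lambda>t u. N t x u"])
    fix u show "(\<lambda>t. N t x u) \<in> borel_measurable (lebesgue_on {0..})"
      unfolding N_def using meas
      by (intro borel_measurable_add measurable_compose[OF _ borel_measurable_norm] borel_measurable_abs) auto
  next
    fix t :: real assume t: "t \<ge> 0"
    show "continuous_on UNIV (\<lambda>u. N t x u)" unfolding N_def
      using fcu[OF t] lcu[OF t] by (intro continuous_intros)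
    show "U t \<noteq> {}" by (rule ne[OF t])
    show "bdd_above ((\<lambda>u. N t x u) ` U t)" using bddL[OF t] by simp
  qed
  have Hlip: "H t x p \<le> H t y p + k t * (1 + norm p) * norm (x - y)" if t: "t \<ge> 0" for t x y p
  proof (rule Hle[OF t])
    fix u assume u: "u \<in> U t"
    define A where "A = norm (f t x u - f t y u)"
    define B where "B = \<bar>l t x u - l t y u\<bar>"
    have kb': "A + B \<le> k t * norm (x - y)" using kb[OF t u, of x y] unfolding A_def B_def .
    have e: "p \<bullet> f t x u - l t x u = (p \<bullet> f t y u - l t y u) + p \<bullet> (f t x u - f t y u) - (l t x u - l t y u)"
      by (simp add: inner_diff_right)
    have cs: "p \<bullet> (f t x u - f t y u) \<le> norm p * A" unfolding A_def by (rule norm_cauchy_schwarz)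
    have lB: "- (l t x u - l t y u) \<le> B" unfolding B_def by simp
    have A0: "0 \<le> A" and B0: "0 \<le> B" unfolding A_def B_def by simp_all
    have "0 \<le> norm p * B" using B0 by simp
    moreover have "(1 + norm p) * (A + B) = A + B + norm p * A + norm p * B" by (simp add: algebra_simps)
    ultimately have m1: "norm p * A + B \<le> (1 + norm p) * (A + B)" using A0 by linarith
    have m2: "(1 + norm p) * (A + B) \<le> (1 + norm p) * (k t * norm (x - y))"
      using kb' by (intro mult_left_mono) auto
    have m3: "(1 + norm p) * (k t * norm (x - y)) = k t * (1 + norm p) * norm (x - y)" by simp
    show "p \<bullet> f t x u - l t x u \<le> H t y p + k t * (1 + norm p) * norm (x - y)"
      using e cs lB m1 m2 m3 Hup[OF t u, of p y] by linarith
  qed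
  have H5: "\<bar>H t x p - H t y p\<bar> \<le> k t * (1 + norm p) * norm (x - y)" if t: "t \<ge> 0" for t x y p
    using Hlip[OF t, where x=x and y=y and p=p] Hlip[OF t, where x=y and y=x and p=p] by (simp add: norm_minus_commute abs_le_iff)
  have Hcont: "continuous_on UNIV (\<lambda>x. H t x p)" if t: "t \<ge> 0" for t p
  proof (rule lipschitz_on_continuous_on)
    show "(k t * (1 + norm p))-lipschitz_on UNIV (\<lambda>x. H t x p)"
    proof (rule lipschitz_onI)
      fix x y :: 'a
      show "dist (H t x p) (H t y p) \<le> k t * (1 + norm p) * dist x y"
        using H5[OF t, where x=x and y=y and p=p] by (simp add: dist_real_def dist_norm)
      show "0 \<le> k t * (1 + norm p)" using k0[OF t] by simp
    qed
  qed
  have Hconv: "convex_on UNIV (H t x)" if t: "t \<ge> 0" for t x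
  proof (rule convex_onI)
    fix s :: real and p q assume s: "s > 0" "s < 1"
    show "H t x ((1 - s) *\<^sub>R p + s *\<^sub>R q) \<le> (1 - s) * H t x p + s * H t x q"
    proof (rule Hle[OF t])
      fix u assume u: "u \<in> U t"
      have e: "((1 - s) *\<^sub>R p + s *\<^sub>R q) \<bullet> f t x u - l t x u
            = (1 - s) * (p \<bullet> f t x u - l t x u) + s * (q \<bullet> f t x u - l t x u)"
        by (simp add: inner_add_left algebra_simps)
      have "(1 - s) * (p \<bullet> f t x u - l t x u) \<le> (1 - s) * H t x p"
        using Hup[OF t u] s by (intro mult_left_mono) auto
      moreover have "s * (q \<bullet> f t x u - l t x u) \<le> s * H t x q"
        using Hup[OF t u] s by (intro mult_left_mono) auto
      ultimately show "((1 - s) *\<^sub>R p + s *\<^sub>R q) \<bullet> f t x u - l t x u \<le> (1 - s) * H t x p + s * H t x q"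
        using e by linarith
    qed
  qed simp
  have H2: "\<forall>t\<ge>0. \<forall>x. H t x 0 \<le> - \<phi> t"
  proof (intro allI impI)
    fix t x assume t: "(t::real) \<ge> 0"
    show "H t x 0 \<le> - \<phi> t" by (rule Hle[OF t]) (use \<phi>b[OF t] in simp)
  qed
  have lam0: "0 \<le> lam t x" if t: "t \<ge> 0" for t x
  proof -
    obtain u where "u \<in> U t" using ne[OF t] by auto
    then show ?thesis using Lup[OF t, of u x] Nnn[of t x u] by linarith
  qed
  have lamc: "lam t x \<le> c t * (1 + norm x)" if t: "t \<ge> 0" for t x
    by (rule Lle[OF t]) (rule bndc[OF t])
  have lamq: "lam t x \<le> q t" if t: "t \<ge> 0" and x: "x \<in> frontier A" for t x
    by (rule Lle[OF t]) (use q(2) t x in \<open>auto simp: N_def\<close>)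
  have lamlip: "lam t x \<le> lam t y + k t * norm (x - y)" if t: "t \<ge> 0" for t x y
  proof (rule Lle[OF t])
    fix u assume u: "u \<in> U t"
    have "norm (f t x u) \<le> norm (f t y u) + norm (f t x u - f t y u)" by (rule norm_triangle_sub)
    moreover have "\<bar>l t x u\<bar> \<le> \<bar>l t y u\<bar> + \<bar>l t x u - l t y u\<bar>" by linarith
    ultimately have "N t x u \<le> N t y u + k t * norm (x - y)"
      using kb[OF t u, of x y] unfolding N_def by linarith
    then show "N t x u \<le> lam t y + k t * norm (x - y)" using Lup[OF t u, of y] by linarith
  qed
  have H4: "\<bar>lam t x - lam t y\<bar> \<le> k t * norm (x - y)" if t: "t \<ge> 0" for t x y
    using lamlip[OF t, where x=x and y=y] lamlip[OF t, where x=y and y=x] by (simp add: norm_minus_commute abs_le_iff)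
  have Lcont: "continuous_on UNIV (lam t)" if t: "t \<ge> 0" for t
  proof (rule lipschitz_on_continuous_on)
    show "(k t)-lipschitz_on UNIV (lam t)"
    proof (rule lipschitz_onI)
      fix x y :: 'a
      show "dist (lam t x) (lam t y) \<le> k t * dist x y"
        using H4[OF t, where x=x and y=y] by (simp add: dist_real_def dist_norm)
      show "0 \<le> k t" using k0[OF t] .
    qed
  qed
  have H6: "\<bar>H t x p - H t x q'\<bar> \<le> lam t x * norm (p - q')" if t: "t \<ge> 0" for t x p q'
  proof -
    have one: "H t x p \<le> H t x q + lam t x * norm (p - q)" for p q
    proof (rule Hle[OF t])
      fix u assume u: "u \<in> U t"
      have e: "p \<bullet> f t x u - l t x u = (q \<bullet> f t x u - l t x u) + (p - q) \<bullet> f t x u"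
        by (simp add: inner_diff_left)
      have "(p - q) \<bullet> f t x u \<le> norm (p - q) * norm (f t x u)" by (rule norm_cauchy_schwarz)
      also have "\<dots> \<le> norm (p - q) * lam t x"
        using Lup[OF t u, of x] unfolding N_def by (intro mult_left_mono) auto
      finally show "p \<bullet> f t x u - l t x u \<le> H t x q + lam t x * norm (p - q)"
        using e Hup[OF t u, of q x] by (simp add: mult.commute)
    qed
    show ?thesis using one[of p q'] one[of q' p] by (simp add: norm_minus_commute abs_le_iff)
  qed
  have H7: "\<bar>Hstar H t x v\<bar> \<le> ereal (lam t x)" if t: "t \<ge> 0" and v: "v \<in> dom_Hstar H t x" for t x v
  proof -
    obtain r where r: "Hstar H t x v = ereal r" using fin[OF v] by blast
    obtain u where u: "u \<in> U t" "v = f t x u" "r = l t x u" using gph[OF t r] by auto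
    have "\<bar>r\<bar> \<le> lam t x" using Lup[OF t u(1), of x] u(3) norm_ge_zero[of "f t x u"] unfolding N_def by linarith
    then show ?thesis using r by simp
  qed
  have part1: "cond_hH A H"
    unfolding cond_hH_def
  proof (intro conjI)
    show "\<forall>x p. (\<lambda>t. H t x p) \<in> borel_measurable (lebesgue_on {0..})" using Hmeas by blast
    show "\<forall>t\<ge>0. \<forall>p. continuous_on UNIV (\<lambda>x. H t x p)" using Hcont by blast
    show "\<forall>t\<ge>0. \<forall>x. convex_on UNIV (H t x)" using Hconv by blast
    show "\<exists>\<phi>. L1_pos \<phi> \<and> (\<forall>t\<ge>0. \<forall>x. H t x 0 \<le> - \<phi> t)" using \<phi>(1) H2 by blast
    show "\<exists>lam c k q.
        (\<forall>t\<ge>0. \<forall>x. 0 \<le> lam t x) \<and>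
        (\<forall>x. (\<lambda>t. lam t x) \<in> borel_measurable (lebesgue_on {0..})) \<and>
        (\<forall>t\<ge>0. continuous_on UNIV (lam t)) \<and>
        L1loc_nonneg c \<and> Lscr_loc k \<and> Lscr_loc q \<and>
        (\<forall>t\<ge>0. (\<forall>x. lam t x \<le> c t * (1 + norm x)) \<and> (\<forall>x\<in>frontier A. lam t x \<le> q t)) \<and>
        (\<forall>t\<ge>0. \<forall>x y. \<bar>lam t x - lam t y\<bar> \<le> k t * norm (x - y)) \<and>
        (\<forall>t\<ge>0. \<forall>x y p. \<bar>H t x p - H t y p\<bar> \<le> k t * (1 + norm p) * norm (x - y)) \<and>
        (\<forall>t\<ge>0. \<forall>x p q'. \<bar>H t x p - H t x q'\<bar> \<le> lam t x * norm (p - q')) \<and>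
        (\<forall>t\<ge>0. \<forall>x. \<forall>v\<in>dom_Hstar H t x. \<bar>Hstar H t x v\<bar> \<le> ereal (lam t x))"
    proof (rule exI[of _ lam], rule exI[of _ c], rule exI[of _ k], rule exI[of _ q], intro conjI)
      show "\<forall>t\<ge>0. \<forall>x. 0 \<le> lam t x" using lam0 by blast
      show "\<forall>x. (\<lambda>t. lam t x) \<in> borel_measurable (lebesgue_on {0..})" using Lmeas by blast
      show "\<forall>t\<ge>0. continuous_on UNIV (lam t)" using Lcont by blast
      show "L1loc_nonneg c" by (rule c(1))
      show "Lscr_loc k" by (rule k(1))
      show "Lscr_loc q" by (rule q(1))
      show "\<forall>t\<ge>0. (\<forall>x. lam t x \<le> c t * (1 + norm x)) \<and> (\<forall>x\<in>frontier A. lam t x \<le> q t)"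
        using lamc lamq by blast
      show "\<forall>t\<ge>0. \<forall>x y. \<bar>lam t x - lam t y\<bar> \<le> k t * norm (x - y)" using H4 by blast
      show "\<forall>t\<ge>0. \<forall>x y p. \<bar>H t x p - H t y p\<bar> \<le> k t * (1 + norm p) * norm (x - y)" using H5 by blast
      show "\<forall>t\<ge>0. \<forall>x p q'. \<bar>H t x p - H t x q'\<bar> \<le> lam t x * norm (p - q')" using H6 by blast
      show "\<forall>t\<ge>0. \<forall>x. \<forall>v\<in>dom_Hstar H t x. \<bar>Hstar H t x v\<bar> \<le> ereal (lam t x)" using H7 by blast
    qed
  qed
  show ?thesis unfolding H_def[symmetric] using part1 part2 part3 by blast
qed

end
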